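(* Let $T$ be a tree on vertex set $\{1,\dots,n\}$, $n\ge2$, let $k\ge2$, and let $M$ be the order-$k$ Steiner distance hypermatrix of $T$. Let $Z$ be the zeta matrix of $T$ rooted at vertex $n$. Then for all $\mathbf{c}_1,\ldots,\mathbf{c}_k\in\mathbb{R}^n$: if $k$ is even, $$M(\mathbf{c}_1,\ldots,\mathbf{c}_k)=\big(U-2(\mathbb{I}^k_{n-1}\oplus[0])\big)(Z\mathbf{c}_1,\ldots,Z\mathbf{c}_k);$$ if $k$ is odd, $$M(\mathbf{c}_1,\ldots,\mathbf{c}_k)=U(Z\mathbf{c}_1,\ldots,Z\mathbf{c}_k).$$
   Context: For $U'\subseteq V(T)$, the Steiner distance $S(U')$ is the minimum number of edges of a connected subgraph of $T$ whose vertex set contains $U'$. The order-$k$ Steiner distance hypermatrix $M$ has entries $M_{(i_1,\dots,i_k)}=S(\{i_1,\dots,i_k\})$, and for any order-$k$, dimension-$n$ hypermatrix $H$, $H(\mathbf{x}_1,\dots,\mathbf{x}_k)=\sum_{\mathbf{i}\in[n]^k}H_{\mathbf{i}}\prod_{j=1}^k x_{j i_j}$. The zeta matrix $Z$ of $T$ rooted at $n$ is the $n\times n$ matrix with $Z_{xy}=1$ if $x$ lies on the unique path in $T$ from $y$ to $n$ (including the endpoints), and $Z_{xy}=0$ otherwise. $U$ is the order-$k$, dimension-$n$ hypermatrix whose $(i_1,\dots,i_k)$ entry equals $(-1)^{t-1}$ if there exist a vertex $w\in\{1,\dots,n-1\}$ and a set $S\subseteq\{1,\dots,k\}$ with $|S|=t$,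 $1\le t\le k-1$, such that $i_j=w$ for $j\in S$ and $i_j=n$ for $j\notin S$; and $0$ otherwise. $\mathbb{I}^k_{n-1}\oplus[0]$ is the order-$k$, dimension-$n$ hypermatrix whose $(i_1,\dots,i_k)$ entry is $1$ if $i_1=\dots=i_k\in\{1,\dots,n-1\}$ and $0$ otherwise. *)

theory Defs
  imports Complex_Main
begin

definition adj :: "nat set set \<Rightarrow> nat \<Rightarrow> nat \<Rightarrow> bool" where
  "adj F x y \<longleftrightarrow> {x, y} \<in> F \<and> x \<noteq> y"

definition connected_graph :: "nat set \<Rightarrow> nat set set \<Rightarrow> bool" where
  "connected_graph W F \<longleftrightarrow> (\<forall>x\<in>W. \<forall>y\<in>W. (adj F)\<^sup>*\<^sup>* x y)"

text \<open>A tree on {1..n}: a connected graph in which no edge lies on a cycle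
  (i.e. acyclic: removing any edge disconnects its endpoints).\<close>
definition is_tree :: "nat \<Rightarrow> nat set set \<Rightarrow> bool" where
  "is_tree n E \<longleftrightarrow>
     (\<forall>e\<in>E. e \<subseteq> {1..n} \<and> card e = 2) \<and>
     connected_graph {1..n} E \<and>
     (\<forall>x y. {x, y} \<in> E \<longrightarrow> x \<noteq> y \<longrightarrow> \<not> (adj (E - {{x, y}}))\<^sup>*\<^sup>* x y)"

definition steiner :: "nat \<Rightarrow> nat set set \<Rightarrow> nat set \<Rightarrow> nat" where
  "steiner n E U' = Min {card F | F W. F \<subseteq> E \<and> W \<subseteq> {1..n} \<and> U' \<subseteq> W \<and>
                          (\<forall>e\<in>F. e \<subseteq> W) \<and> connected_graph W F}"

text \<open>Hypermatrices of order k, dimension n: functions on index lists of length k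
  with entries in {1..n}. Vectors in R^n are functions on {1..n}; a k-tuple of vectors
  is indexed by j < k.\<close>
definition hm_indices :: "nat \<Rightarrow> nat \<Rightarrow> nat list set" where
  "hm_indices n k = {i. length i = k \<and> set i \<subseteq> {1..n}}"

definition hm_form :: "nat \<Rightarrow> nat \<Rightarrow> (nat list \<Rightarrow> real) \<Rightarrow> (nat \<Rightarrow> nat \<Rightarrow> real) \<Rightarrow> real" where
  "hm_form n k H x = (\<Sum>i\<in>hm_indices n k. H i * (\<Prod>j<k. x j (i ! j)))"

definition steiner_hm :: "nat \<Rightarrow> nat set set \<Rightarrow> nat list \<Rightarrow> real" where
  "steiner_hm n E i = real (steiner n E (set i))"

definition is_path :: "nat set set \<Rightarrow> nat list \<Rightarrow> nat \<Rightarrow> nat \<Rightarrow> bool" where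
  "is_path E p a b \<longleftrightarrow> p \<noteq> [] \<and> hd p = a \<and> last p = b \<and> distinct p \<and>
      (\<forall>j. Suc j < length p \<longrightarrow> adj E (p ! j) (p ! Suc j))"

definition zeta :: "nat \<Rightarrow> nat set set \<Rightarrow> nat \<Rightarrow> nat \<Rightarrow> real" where
  "zeta n E x y = (if \<exists>p. is_path E p y n \<and> x \<in> set p then 1 else 0)"

definition zeta_mult :: "nat \<Rightarrow> nat set set \<Rightarrow> (nat \<Rightarrow> real) \<Rightarrow> nat \<Rightarrow> real" where
  "zeta_mult n E c = (\<lambda>x. \<Sum>y=1..n. zeta n E x y * c y)"

text \<open>The hypermatrix U (positions in index lists are 0..k-1).\<close>
definition U_cond :: "nat \<Rightarrow> nat \<Rightarrow> nat list \<Rightarrow> nat \<Rightarrow> bool" where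
  "U_cond n k i t \<longleftrightarrow> (\<exists>w\<in>{1..n-1}. \<exists>S\<subseteq>{..<k}. card S = t \<and> 1 \<le> t \<and> t \<le> k - 1 \<and>
      (\<forall>j<k. i ! j = (if j \<in> S then w else n)))"

definition U_hm :: "nat \<Rightarrow> nat \<Rightarrow> nat list \<Rightarrow> real" where
  "U_hm n k i = (if \<exists>t. U_cond n k i t then (-1) ^ ((THE t. U_cond n k i t) - 1) else 0)"

definition Id_hm :: "nat \<Rightarrow> nat \<Rightarrow> nat list \<Rightarrow> real" where
  "Id_hm n k i = (if \<exists>v\<in>{1..n-1}. \<forall>j<k. i ! j = v then 1 else 0)"

end

theory Submission
  imports Defs
begin


lemma is_path_Cons:
  "is_path E (x # p) a b \<longleftrightarrow> x = a \<and> (if p = [] then b = a else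
     adj E a (hd p) \<and> a \<notin> set p \<and> is_path E p (hd p) b)"
proof (cases p)
  case Nil then show ?thesis by (auto simp: is_path_def)
next
  case (Cons y q)
  have "(\<forall>j. Suc j < length (x#y#q) \<longrightarrow> adj E ((x#y#q) ! j) ((x#y#q) ! Suc j)) \<longleftrightarrow>
        adj E x y \<and> (\<forall>j. Suc j < length (y#q) \<longrightarrow> adj E ((y#q) ! j) ((y#q) ! Suc j))"
    (is "?L \<longleftrightarrow> ?R")
  proof
    assume ?L then show ?R by (metis Suc_less_eq length_Cons nth_Cons_0 nth_Cons_Suc zero_less_Suc)
  next
    assume R: ?R show ?L
    proof (intro allI impI)
      fix j assume "Suc j < length (x#y#q)"
      then show "adj E ((x#y#q) ! j) ((x#y#q) ! Suc j)" using R by (cases j) auto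
    qed
  qed
  then show ?thesis using Cons by (auto simp: is_path_def)
qed

lemma is_path_drop:
  assumes "is_path E p a b" "i < length p"
  shows "is_path E (drop i p) (p ! i) b"
  using assms unfolding is_path_def
  by (auto simp: hd_drop_conv_nth last_drop)

lemma is_path_take:
  assumes "is_path E p a b" "i < length p"
  shows "is_path E (take (Suc i) p) a (p ! i)"
  using assms unfolding is_path_def
  apply (auto simp: hd_conv_nth last_conv_nth min_def)
  apply (subgoal_tac "i = length p - Suc 0")
   apply simp
  apply arith
  done

lemma rtranclp_adj_sym:
  assumes "(adj F)\<^sup>*\<^sup>* a b" shows "(adj F)\<^sup>*\<^sup>* b a"
  using assms
proof (induction rule: rtranclp_induct)
  case base then show ?case by simp
next
  case (step y z)
  have "adj F z y" using step(2) by (auto simp: adj_def insert_commute)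
  then show ?case using step(3) by (meson converse_rtranclp_into_rtranclp)
qed

lemma path_walk:
  assumes "is_path E p a b" "\<forall>j. Suc j < length p \<longrightarrow> {p!j, p!Suc j} \<noteq> e"
  shows "(adj (E - {e}))\<^sup>*\<^sup>* a b"
  using assms
proof (induction p arbitrary: a)
  case Nil then show ?case by (simp add: is_path_def)
next
  case (Cons x p)
  show ?case
  proof (cases "p = []")
    case True then show ?thesis using Cons.prems by (simp add: is_path_Cons)
  next
    case False
    have x: "x = a" "adj E a (hd p)" "is_path E p (hd p) b" using Cons.prems False by (auto simp: is_path_Cons)
    have "{a, hd p} \<noteq> e" using Cons.prems(2)[rule_format, of 0] False x by (auto simp: hd_conv_nth)
    then have "adj (E - {e}) a (hd p)" using x(2) by (auto simp: adj_def)
    moreover have "(adj (E - {e}))\<^sup>*\<^sup>* (hd p) b"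
    proof (rule Cons.IH[OF x(3)], intro allI impI)
      fix j assume "Suc j < length p"
      then show "{p!j, p!Suc j} \<noteq> e" using Cons.prems(2)[rule_format, of "Suc j"] by auto
    qed
    ultimately show ?thesis by (meson converse_rtranclp_into_rtranclp)
  qed
qed

lemma path_walk_avoid:
  assumes "is_path E p a b" "v \<notin> set p" "v \<in> e"
  shows "(adj (E - {e}))\<^sup>*\<^sup>* a b"
  using assms by (intro path_walk[OF assms(1)]) (auto)

lemma path_exists:
  assumes "(adj E)\<^sup>*\<^sup>* a b" shows "\<exists>p. is_path E p a b"
  using assms
proof (induction rule: converse_rtranclp_induct)
  case base then show ?case by (rule exI[of _ "[b]"]) (simp add: is_path_def)
next
  case (step a a')
  then obtain p where p: "is_path E p a' b" by blast
  show ?case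
  proof (cases "a \<in> set p")
    case True
    then obtain i where "i < length p" "p ! i = a" by (auto simp: in_set_conv_nth)
    then show ?thesis using is_path_drop[OF p] by metis
  next
    case False
    have "p \<noteq> []" "hd p = a'" using p by (auto simp: is_path_def)
    then have "is_path E (a # p) a b" using False p step(1) by (auto simp: is_path_Cons)
    then show ?thesis by blast
  qed
qed



locale tree_ctx =
  fixes n :: nat and E :: "nat set set"
  assumes tree: "is_tree n E" and n2: "n \<ge> 2"
begin

lemma edge_sub: "e \<in> E \<Longrightarrow> e \<subseteq> {1..n}"
  using tree by (auto simp: is_tree_def)

lemma adj_in: "adj E a b \<Longrightarrow> a \<in> {1..n} \<and> b \<in> {1..n}"
  unfolding adj_def using edge_sub by (meson insert_subset)

lemma conn: "y \<in> {1..n} \<Longrightarrow> (adj E)\<^sup>*\<^sup>* y n"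
  using tree n2 by (auto simp: is_tree_def connected_graph_def)

lemma bridge: "{x, y} \<in> E \<Longrightarrow> x \<noteq> y \<Longrightarrow> \<not> (adj (E - {{x, y}}))\<^sup>*\<^sup>* x y"
  using tree by (auto simp: is_tree_def)

lemma path_unique: "is_path E p a b \<Longrightarrow> is_path E q a b \<Longrightarrow> p = q"
proof (induction p arbitrary: a q)
  case Nil then show ?case by (simp add: is_path_def)
next
  case (Cons x p)
  obtain y q' where q: "q = y # q'" using Cons.prems(2) by (cases q) (auto simp: is_path_def)
  have xa: "x = a" "y = a" using Cons.prems q by (auto simp: is_path_Cons)
  show ?case
  proof (cases "p = []")
    case True
    then have "a = b" using Cons.prems xa by (auto simp: is_path_Cons)
    have "q' = []"
    proof (rule ccontr)
      assume "q' \<noteq> []"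
      then have "is_path E q' (hd q') b" "a \<notin> set q'" using Cons.prems(2) q xa by (auto simp: is_path_Cons)
      then show False using \<open>q' \<noteq> []\<close> \<open>a = b\<close> by (metis is_path_def last_in_set)
    qed
    then show ?thesis using True q xa by simp
  next
    case False
    have P: "adj E a (hd p)" "a \<notin> set p" "is_path E p (hd p) b"
      using Cons.prems(1) False xa by (auto simp: is_path_Cons)
    have "a \<noteq> b" using P(2,3) by (auto simp: is_path_def)
    then have "q' \<noteq> []" using Cons.prems(2) q xa by (auto simp: is_path_Cons)
    then have Q: "adj E a (hd q')" "a \<notin> set q'" "is_path E q' (hd q') b"
      using Cons.prems(2) q xa by (auto simp: is_path_Cons)
    show ?thesis
    proof (cases "hd p = hd q'")
      case True
      then have "p = q'" using Cons.IH P(3) Q(3) by metis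
      then show ?thesis using q xa by simp
    next
      case False
      let ?e = "{a, hd p}"
      have w1: "(adj (E - {?e}))\<^sup>*\<^sup>* (hd p) b" by (rule path_walk_avoid[OF P(3) P(2)]) simp
      have w2: "(adj (E - {?e}))\<^sup>*\<^sup>* (hd q') b" by (rule path_walk_avoid[OF Q(3) Q(2)]) simp
      have "a \<noteq> hd q'" "a \<noteq> hd p" using Q(1) P(1) by (auto simp: adj_def)
      then have "adj (E - {?e}) (hd q') a" using Q(1) False
        by (auto simp: adj_def insert_commute doubleton_eq_iff)
      then have "(adj (E - {?e}))\<^sup>*\<^sup>* (hd p) a"
        using w1 rtranclp_adj_sym[OF w2] by (meson rtranclp.rtrancl_into_rtrancl rtranclp_trans)
      then have "(adj (E - {?e}))\<^sup>*\<^sup>* a (hd p)" by (rule rtranclp_adj_sym)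
      moreover have "?e \<in> E" "a \<noteq> hd p" using P(1) by (auto simp: adj_def)
      ultimately show ?thesis using bridge by blast
    qed
  qed
qed

lemma path_set: assumes "is_path E p a b" "a \<in> {1..n}" shows "set p \<subseteq> {1..n}"
proof
  fix x assume "x \<in> set p"
  then obtain j where j: "j < length p" "p ! j = x" by (auto simp: in_set_conv_nth)
  show "x \<in> {1..n}"
  proof (cases j)
    case 0 then show ?thesis using assms j by (auto simp: is_path_def hd_conv_nth)
  next
    case (Suc j')
    then have "adj E (p ! j') (p ! j)" using assms j by (auto simp: is_path_def)
    then show ?thesis using adj_in j by auto
  qed
qed

definition tpath :: "nat \<Rightarrow> nat list" where "tpath y = (THE p. is_path E p y n)"
definition par :: "nat \<Rightarrow> nat" where "par y = tpath y ! 1"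
definition anc :: "nat \<Rightarrow> nat \<Rightarrow> bool" where "anc x y \<longleftrightarrow> x \<in> set (tpath y)"

lemma tpath_eq: "is_path E p y n \<Longrightarrow> tpath y = p"
  unfolding tpath_def using path_unique by blast

lemma tpath_path: "y \<in> {1..n} \<Longrightarrow> is_path E (tpath y) y n"
  using path_exists[OF conn] tpath_eq by metis

lemma tpath_n: "tpath n = [n]"
  by (rule tpath_eq) (simp add: is_path_def)

lemma tpath_set: "y \<in> {1..n} \<Longrightarrow> set (tpath y) \<subseteq> {1..n}"
  using path_set tpath_path by blast

lemma tpath_Cons:
  assumes y: "y \<in> {1..n}" "y \<noteq> n"
  shows "tpath y = y # tpath (par y) \<and> par y \<in> {1..n} \<and> adj E y (par y) \<and> par y \<noteq> y"
proof -
  have p: "is_path E (tpath y) y n" using tpath_path y by simp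
  then obtain q where q: "tpath y = y # q" by (cases "tpath y") (auto simp: is_path_def)
  then have "q \<noteq> []" using p y by (auto simp: is_path_Cons)
  then have Q: "adj E y (hd q)" "y \<notin> set q" "is_path E q (hd q) n"
    using p q by (auto simp: is_path_Cons)
  have "par y = hd q" using q \<open>q \<noteq> []\<close> by (simp add: par_def hd_conv_nth)
  then have "tpath (par y) = q" using Q tpath_eq by simp
  then show ?thesis using q Q \<open>par y = hd q\<close> adj_in \<open>q \<noteq> []\<close> by auto
qed

lemma tpath_hd: "y \<in> {1..n} \<Longrightarrow> tpath y ! 0 = y"
  using tpath_path[of y] by (metis is_path_def hd_conv_nth)

lemma anc_refl: "y \<in> {1..n} \<Longrightarrow> anc y y"
  using tpath_path[of y] by (metis anc_def is_path_def hd_in_set)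

lemma anc_n: "y \<in> {1..n} \<Longrightarrow> anc n y"
  using tpath_path[of y] by (metis anc_def is_path_def last_in_set)

lemma anc_in: "y \<in> {1..n} \<Longrightarrow> anc x y \<Longrightarrow> x \<in> {1..n}"
  unfolding anc_def using tpath_set by blast

lemma anc_suffix:
  assumes "y \<in> {1..n}" "anc x y"
  shows "\<exists>i<length (tpath y). tpath x = drop i (tpath y) \<and> tpath y ! i = x"
proof -
  obtain i where i: "i < length (tpath y)" "tpath y ! i = x" using assms by (auto simp: anc_def in_set_conv_nth)
  have "tpath x = drop i (tpath y)" using is_path_drop[OF tpath_path[OF assms(1)] i(1)] i(2) tpath_eq by simp
  then show ?thesis using i by blast
qed

lemma anc_trans: "y \<in> {1..n} \<Longrightarrow> anc a b \<Longrightarrow> anc b y \<Longrightarrow> anc a y"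
  using anc_suffix[of y b] by (auto simp: anc_def dest: in_set_dropD)

lemma anc_chain: assumes "y \<in> {1..n}" "anc a y" "anc b y" shows "anc a b \<or> anc b a"
proof -
  obtain i where i: "i<length (tpath y)" "tpath a = drop i (tpath y)" "tpath y ! i = a" using anc_suffix assms by blast
  obtain j where j: "j<length (tpath y)" "tpath b = drop j (tpath y)" "tpath y ! j = b" using anc_suffix assms by blast
  show ?thesis
  proof (cases "i \<le> j")
    case True
    have "tpath a ! (j - i) = b" "j - i < length (tpath a)" using i j True by auto
    then have "b \<in> set (tpath a)" by (metis nth_mem)
    then show ?thesis by (simp add: anc_def)
  next
    case False
    have "tpath b ! (i - j) = a" "i - j < length (tpath b)" using i j False by auto
    then have "a \<in> set (tpath b)" by (metis nth_mem)
    then show ?thesis by (simp add: anc_def)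
  qed
qed

lemma anc_step: "y \<in> {1..n} \<Longrightarrow> anc x y \<longleftrightarrow> x = y \<or> (y \<noteq> n \<and> anc x (par y))"
  using tpath_Cons[of y] tpath_n by (cases "y = n") (auto simp: anc_def)

lemma anc_depth:
  assumes "y \<in> {1..n}" "anc x y" "x \<noteq> y" shows "length (tpath x) < length (tpath y)"
proof -
  obtain i where i: "i<length (tpath y)" "tpath x = drop i (tpath y)" "tpath y ! i = x" using anc_suffix assms by blast
  have "i \<noteq> 0"
  proof
    assume "i = 0" then show False using i tpath_hd[OF assms(1)] assms(3) by simp
  qed
  then show ?thesis using i by simp
qed

lemma edge_par:
  assumes e: "{x, y} \<in> E" "x \<noteq> y"
  shows "(x \<noteq> n \<and> par x = y) \<or> (y \<noteq> n \<and> par y = x)"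
proof -
  have xy: "x \<in> {1..n}" "y \<in> {1..n}" using edge_sub[OF e(1)] by (meson insert_subset)+
  have axy: "adj E x y" "adj E y x" using e by (auto simp: adj_def insert_commute)
  have px: "is_path E (tpath x) x n" using tpath_path xy by simp
  show ?thesis
  proof (cases "y \<in> set (tpath x)")
    case False
    have hx: "hd (tpath x) = x" "tpath x \<noteq> []" using px by (auto simp: is_path_def)
    have "is_path E (y # tpath x) y n" using False px axy hx by (auto simp: is_path_Cons)
    then have ty: "tpath y = y # tpath x" by (rule tpath_eq)
    have "y \<noteq> n" using False anc_n[OF xy(1)] by (auto simp: anc_def)
    then have "tpath (par y) = tpath x" using tpath_Cons[of y] xy ty by auto
    then have "par y = x" using tpath_hd xy tpath_Cons[of y] \<open>y \<noteq> n\<close> by metis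
    then show ?thesis using \<open>y \<noteq> n\<close> by simp
  next
    case True
    then obtain m where m: "m < length (tpath x)" "tpath x ! m = y" by (auto simp: in_set_conv_nth)
    have "m \<noteq> 0"
    proof
      assume "m = 0" then show False using m tpath_hd[OF xy(1)] e(2) by simp
    qed
    have "x \<noteq> n" using m \<open>m \<noteq> 0\<close> tpath_n by auto
    show ?thesis
    proof (cases "m = 1")
      case True then show ?thesis using m \<open>x \<noteq> n\<close> by (simp add: par_def)
    next
      case False
      define q where "q = take (Suc m) (tpath x)"
      have pq: "is_path E q x y" using is_path_take[OF px m(1)] m by (simp add: q_def)
      have lq: "length q = Suc m" using m by (simp add: q_def)
      have dq: "distinct q" "q ! 0 = x" "q ! m = y" using pq lq m tpath_hd xy
        by (auto simp: is_path_def q_def)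
      have "\<forall>j. Suc j < length q \<longrightarrow> {q!j, q!Suc j} \<noteq> {x, y}"
      proof (intro allI impI notI)
        fix j assume j: "Suc j < length q" "{q!j, q!Suc j} = {x, y}"
        have "q ! j = q ! 0 \<or> q ! j = q ! m" using j dq by auto
        then have "j = 0 \<or> j = m" using dq(1) j lq by (auto simp: nth_eq_iff_index_eq)
        then have "j = 0" using j lq by auto
        then have "q ! 1 = q ! 0 \<or> q ! 1 = q ! m" using j dq by (auto simp: doubleton_eq_iff)
        then have "1 = (0::nat) \<or> 1 = m" using dq(1) j lq \<open>m \<noteq> 0\<close> by (auto simp: nth_eq_iff_index_eq)
        then show False using False by auto
      qed
      then have "(adj (E - {{x, y}}))\<^sup>*\<^sup>* x y" by (rule path_walk[OF pq])
      then show ?thesis using bridge e by blast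
    qed
  qed
qed

lemma zeta_anc: "y \<in> {1..n} \<Longrightarrow> zeta n E x y = (if anc x y then 1 else 0)"
  unfolding zeta_def anc_def using tpath_path tpath_eq by metis

end


lemma rtranclp_cross:
  assumes "r\<^sup>*\<^sup>* a b" "P a" "\<not> P b" shows "\<exists>x y. r x y \<and> P x \<and> \<not> P y"
  using assms by (induction rule: rtranclp_induct) auto

context tree_ctx
begin

definition splitset :: "nat set \<Rightarrow> nat set" where
  "splitset W = {v \<in> {1..n-1}. (\<exists>y\<in>W. anc v y) \<and> (\<exists>y\<in>W. \<not> anc v y)}"

lemma finite_E: "finite E"
proof -
  have "E \<subseteq> Pow {1..n}" using edge_sub by auto
  then show ?thesis by (rule finite_subset) simp
qed

lemma par_facts: assumes "v \<in> {1..n-1}" shows "v \<noteq> n \<and> tpath v = v # tpath (par v) \<and> par v \<in> {1..n} \<and> adj E v (par v) \<and> par v \<noteq> v"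
proof -
  have v: "v \<in> {1..n}" "v \<noteq> n" using assms n2 by auto
  show ?thesis using tpath_Cons[OF v] v(2) by blast
qed

lemma inj_par_edge: "inj_on (\<lambda>v. {v, par v}) {1..n-1}"
proof (rule inj_onI)
  fix u v assume u: "u \<in> {1..n-1}" and v: "v \<in> {1..n-1}" and eq: "{u, par u} = {v, par v}"
  show "u = v"
  proof (rule ccontr)
    assume "u \<noteq> v"
    then have "u = par v" "par u = v" using eq by (auto simp: doubleton_eq_iff)
    have t1: "tpath v = v # tpath (par v)" using par_facts[OF v] by blast
    have t2: "tpath u = u # tpath (par u)" using par_facts[OF u] by blast
    have "length (tpath v) = Suc (length (tpath (par v)))" by (subst t1) simp
    moreover have "length (tpath u) = Suc (length (tpath (par u)))" by (subst t2) simp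
    ultimately show False using \<open>u = par v\<close> \<open>par u = v\<close> by simp
  qed
qed

lemma splitset_sub: "splitset W \<subseteq> {1..n-1}"
  by (auto simp: splitset_def)

lemma lower:
  assumes F: "F \<subseteq> E" "W' \<subseteq> {1..n}" "W \<subseteq> W'" "\<forall>e\<in>F. e \<subseteq> W'" "connected_graph W' F"
  shows "card (splitset W) \<le> card F"
proof -
  have mem: "{v, par v} \<in> F" if v: "v \<in> splitset W" for v
  proof -
    obtain a b where ab: "a \<in> W" "anc v a" "b \<in> W" "\<not> anc v b" using v by (auto simp: splitset_def)
    have "(adj F)\<^sup>*\<^sup>* a b" using F(3,5) ab unfolding connected_graph_def by blast
    then obtain x y where xy: "adj F x y" "anc v x" "\<not> anc v y" using rtranclp_cross[of "adj F" a b "anc v"] ab by blast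
    have e: "{x, y} \<in> E" "x \<noteq> y" using xy(1) F(1) by (auto simp: adj_def)
    have xyn: "x \<in> {1..n}" "y \<in> {1..n}" using edge_sub[OF e(1)] by (meson insert_subset)+
    from edge_par[OF e] show ?thesis
    proof
      assume h: "x \<noteq> n \<and> par x = y"
      then have "v = x" using anc_step[OF xyn(1), of v] xy by auto
      then show ?thesis using h xy(1) by (auto simp: adj_def)
    next
      assume h: "y \<noteq> n \<and> par y = x"
      then have "anc v y" using anc_step[OF xyn(2), of v] xy by auto
      then show ?thesis using xy by simp
    qed
  qed
  have "inj_on (\<lambda>v. {v, par v}) (splitset W)" using inj_par_edge splitset_sub by (rule inj_on_subset)
  moreover have "finite F" using F(1) finite_E finite_subset by blast
  ultimately show ?thesis using mem by (intro card_inj_on_le) auto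
qed

lemma upper:
  assumes W: "W \<subseteq> {1..n}" "W \<noteq> {}"
  shows "\<exists>F W'. F \<subseteq> E \<and> W' \<subseteq> {1..n} \<and> W \<subseteq> W' \<and> (\<forall>e\<in>F. e \<subseteq> W') \<and> connected_graph W' F
     \<and> card F = card (splitset W)"
proof -
  define C where "C = {u \<in> {1..n}. \<forall>y\<in>W. anc u y}"
  have "n \<in> C" using anc_n W n2 by (auto simp: C_def)
  have fC: "finite C" by (simp add: C_def)
  define m where "m = Max ((\<lambda>u. length (tpath u)) ` C)"
  have "m \<in> (\<lambda>u. length (tpath u)) ` C"
    unfolding m_def using fC \<open>n \<in> C\<close> by (intro Max_in) auto
  then obtain r where r: "r \<in> C" "length (tpath r) = m" by auto
  have rmax: "length (tpath u) \<le> length (tpath r)" if "u \<in> C" for u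
    using Max_ge[of "(\<lambda>u. length (tpath u)) ` C"] fC that r unfolding m_def by auto
  define A where "A = splitset W"
  define F' where "F' = (\<lambda>v. {v, par v}) ` A"
  define W' where "W' = W \<union> A \<union> par ` A"
  have A_sub: "A \<subseteq> {1..n-1}" using splitset_sub A_def by simp
  have rn: "r \<in> {1..n}" using r by (auto simp: C_def)
  have K: "(adj F')\<^sup>*\<^sup>* x r" if "x \<in> {1..n}" "\<exists>y\<in>W. anc x y" "anc r x" for x
    using that
  proof (induction "length (tpath x)" arbitrary: x rule: less_induct)
    case less
    show ?case
    proof (cases "x = r")
      case True then show ?thesis by simp
    next
      case False
      have "x \<notin> C"
      proof
        assume "x \<in> C"
        then have "length (tpath x) \<le> length (tpath r)" by (rule rmax)
        moreover have "length (tpath r) < length (tpath x)" using anc_depth less.prems False by auto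
        ultimately show False by simp
      qed
      then obtain y' where y': "y' \<in> W" "\<not> anc x y'" using less.prems by (auto simp: C_def)
      have "x \<noteq> n" using less.prems(3) False tpath_n by (auto simp: anc_def)
      then have xA: "x \<in> A" using less.prems y' by (auto simp: A_def splitset_def)
      then have pf: "tpath x = x # tpath (par x) \<and> par x \<in> {1..n} \<and> adj E x (par x) \<and> par x \<noteq> x"
        using par_facts A_sub by auto
      obtain y0 where y0: "y0 \<in> W" "anc x y0" using less.prems by auto
      have "anc (par x) x" using pf anc_refl by (auto simp: anc_def)
      then have "anc (par x) y0" using anc_trans y0 W by blast
      moreover have "anc r (par x)" using anc_step[OF less.prems(1), of r] less.prems(3) False by auto
      ultimately have "(adj F')\<^sup>*\<^sup>* (par x) r" using less.hyps[of "par x"] pf y0 by auto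
      moreover have "adj F' x (par x)" using xA pf by (auto simp: F'_def adj_def)
      ultimately show ?thesis by (meson converse_rtranclp_into_rtranclp)
    qed
  qed
  have rA: "anc r v \<and> r \<noteq> v" if vA: "v \<in> A" for v
  proof -
    have "v \<in> splitset W" using vA A_def by simp
    then obtain y y' where y: "y \<in> W" "anc v y" and y': "y' \<in> W" "\<not> anc v y'"
      unfolding splitset_def by blast
    have "anc r y" using r y by (auto simp: C_def)
    then have "anc r v \<or> anc v r" using anc_chain y W by blast
    moreover have "\<not> anc v r" using anc_trans[of y' v r] r y' W by (auto simp: C_def)
    moreover have "r \<noteq> v" using r y' by (auto simp: C_def)
    ultimately show ?thesis by blast
  qed
  have toR: "(adj F')\<^sup>*\<^sup>* z r" if zW: "z \<in> W'" for z
  proof -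
    consider "z \<in> W" | "z \<in> A" | v where "v \<in> A" "z = par v" using zW W'_def by blast
    then show ?thesis
    proof cases
      case 1
      then have zn: "z \<in> {1..n}" using W by auto
      have "anc z z" using anc_refl[OF zn] .
      moreover have "anc r z" using r 1 by (auto simp: C_def)
      ultimately show ?thesis using K[OF zn] 1 by blast
    next
      case 2
      then have "z \<in> {1..n}" "\<exists>y\<in>W. anc z y" using A_sub by (auto simp: A_def splitset_def)
      then show ?thesis using K[of z] rA[OF 2] by auto
    next
      case 3
      have pf: "tpath v = v # tpath (par v) \<and> par v \<in> {1..n} \<and> adj E v (par v) \<and> par v \<noteq> v"
        using par_facts A_sub 3 by auto
      obtain y where y: "y \<in> W" "anc v y" using 3 by (auto simp: A_def splitset_def)
      have "anc (par v) v" using pf anc_refl by (auto simp: anc_def)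
      then have "anc (par v) y" using anc_trans y W by blast
      have v1: "v \<in> {1..n-1}" using 3 A_sub by blast
      have vn: "v \<in> {1..n}" "v \<noteq> n" using v1 n2 by auto
      have "anc r (par v)" using anc_step[OF vn(1), of r] rA[OF 3(1)] vn(2) by auto
      then show ?thesis using K[of "par v"] pf y 3 \<open>anc (par v) y\<close> by auto
    qed
  qed
  have f1: "F' \<subseteq> E" using par_facts A_sub by (auto simp: F'_def adj_def)
  have A1: "A \<subseteq> {1..n}"
  proof
    fix x assume "x \<in> A" then have "x \<in> {1..n-1}" using A_sub by blast
    then show "x \<in> {1..n}" by auto
  qed
  have A2: "par ` A \<subseteq> {1..n}"
  proof
    fix x assume "x \<in> par ` A"
    then obtain v where "v \<in> A" "x = par v" by blast
    then have "v \<in> {1..n-1}" using A_sub by blast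
    then show "x \<in> {1..n}" using par_facts \<open>x = par v\<close> by blast
  qed
  have f2: "W' \<subseteq> {1..n}" using W A1 A2 unfolding W'_def by blast
  have f3: "W \<subseteq> W'" unfolding W'_def by blast
  have f4: "\<forall>e\<in>F'. e \<subseteq> W'" by (auto simp: F'_def W'_def)
  have f5: "connected_graph W' F'"
    unfolding connected_graph_def
  proof (intro ballI)
    fix x y assume "x \<in> W'" "y \<in> W'"
    then have "(adj F')\<^sup>*\<^sup>* x r" "(adj F')\<^sup>*\<^sup>* r y" using toR rtranclp_adj_sym by auto
    then show "(adj F')\<^sup>*\<^sup>* x y" by (rule rtranclp_trans)
  qed
  have f6: "card F' = card (splitset W)" unfolding F'_def A_def[symmetric]
    using inj_on_subset[OF inj_par_edge A_sub] by (rule card_image)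
  show ?thesis by (rule exI[of _ F'], rule exI[of _ W']) (intro conjI f1 f2 f3 f4 f5 f6)
qed

lemma steiner_split:
  assumes W: "W \<subseteq> {1..n}" "W \<noteq> {}"
  shows "steiner n E W = card (splitset W)"
proof -
  define S where "S = {card F | F W'. F \<subseteq> E \<and> W' \<subseteq> {1..n} \<and> W \<subseteq> W' \<and>
                          (\<forall>e\<in>F. e \<subseteq> W') \<and> connected_graph W' F}"
  have "S \<subseteq> card ` Pow E" by (auto simp: S_def)
  moreover have "finite (card ` Pow E)" using finite_E by simp
  ultimately have "finite S" by (rule finite_subset)
  moreover have "\<forall>y\<in>S. card (splitset W) \<le> y"
  proof
    fix y assume "y \<in> S"
    then obtain F W' where h: "y = card F" "F \<subseteq> E" "W' \<subseteq> {1..n}" "W \<subseteq> W'"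
      "\<forall>e\<in>F. e \<subseteq> W'" "connected_graph W' F" unfolding S_def by blast
    show "card (splitset W) \<le> y" unfolding h(1) by (rule lower[OF h(2-6)])
  qed
  moreover have "card (splitset W) \<in> S"
  proof -
    obtain F0 W0 where h: "F0 \<subseteq> E" "W0 \<subseteq> {1..n}" "W \<subseteq> W0" "\<forall>e\<in>F0. e \<subseteq> W0"
      "connected_graph W0 F0" "card F0 = card (splitset W)" using upper[OF W] by blast
    show ?thesis unfolding S_def mem_Collect_eq
      by (rule exI[of _ F0], rule exI[of _ W0]) (intro conjI h(1-5) h(6)[symmetric])
  qed
  ultimately have "Min S = card (splitset W)" by (simp add: Min_eqI)
  then show ?thesis by (simp add: steiner_def S_def)
qed

end


lemma hm_indices_0: "hm_indices n 0 = {[]}" by (auto simp: hm_indices_def)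

lemma hm_indices_Suc: "hm_indices n (Suc k) = (\<lambda>(a,i). a # i) ` ({1..n} \<times> hm_indices n k)"
proof (intro set_eqI iffI)
  fix x assume "x \<in> hm_indices n (Suc k)"
  then obtain a i where "x = a # i" "length i = k" "a \<in> {1..n}" "set i \<subseteq> {1..n}"
    by (cases x) (auto simp: hm_indices_def)
  then show "x \<in> (\<lambda>(a,i). a # i) ` ({1..n} \<times> hm_indices n k)"
    by (intro rev_image_eqI[of "(a, i)"]) (auto simp: hm_indices_def)
next
  fix x assume "x \<in> (\<lambda>(a,i). a # i) ` ({1..n} \<times> hm_indices n k)"
  then show "x \<in> hm_indices n (Suc k)" by (auto simp: hm_indices_def)
qed

lemma finite_hm: "finite (hm_indices n k)"
  by (induction k) (auto simp: hm_indices_0 hm_indices_Suc)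

lemma sum_lists_prod:
  "(\<Sum>i\<in>hm_indices n k. \<Prod>j<k. f j (i!j)) = (\<Prod>j<k. \<Sum>y\<in>{1..n}. (f j y :: real))"
proof (induction k arbitrary: f)
  case 0 show ?case by (simp add: hm_indices_0)
next
  case (Suc k)
  have inj: "inj_on (\<lambda>(a,i). a # i) ({1..n} \<times> hm_indices n k)" by (auto simp: inj_on_def)
  have "(\<Sum>i\<in>hm_indices n (Suc k). \<Prod>j<Suc k. f j (i!j))
      = (\<Sum>x\<in>{1..n} \<times> hm_indices n k. \<Prod>j<Suc k. f j ((fst x # snd x)!j))"
    unfolding hm_indices_Suc by (subst sum.reindex[OF inj]) (simp add: case_prod_unfold)
  also have "\<dots> = (\<Sum>a\<in>{1..n}. \<Sum>i\<in>hm_indices n k. f 0 a * (\<Prod>j<k. f (Suc j) (i!j)))"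
    unfolding prod.lessThan_Suc_shift by (simp add: sum.cartesian_product case_prod_unfold)
  also have "\<dots> = (\<Sum>a\<in>{1..n}. f 0 a) * (\<Sum>i\<in>hm_indices n k. \<Prod>j<k. f (Suc j) (i!j))"
    by (simp add: sum_product)
  also have "\<dots> = (\<Sum>a\<in>{1..n}. f 0 a) * (\<Prod>j<k. \<Sum>y\<in>{1..n}. f (Suc j) y)"
    using Suc.IH[of "\<lambda>j. f (Suc j)"] by simp
  also have "\<dots> = (\<Prod>j<Suc k. \<Sum>y\<in>{1..n}. f j y)"
    unfolding prod.lessThan_Suc_shift by simp
  finally show ?case .
qed

lemma prod_if_zero:
  fixes k :: nat shows
  "(\<Prod>j<k. if Q j then a j else 0) = (if \<forall>j<k. Q j then \<Prod>j<k. a j else (0::real))"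
proof (cases "\<forall>j<k. Q j")
  case True then show ?thesis by (auto intro: prod.cong)
next
  case False
  then obtain j where "j < k" "\<not> Q j" by auto
  then have "(\<Prod>j<k. if Q j then a j else 0) = (0::real)"
    using \<open>j < k\<close> \<open>\<not> Q j\<close> by (intro prod_zero) auto
  then show ?thesis using False by simp
qed

lemma sum_lists_filter:
  "(\<Sum>i\<in>hm_indices n k. (if \<forall>j<k. Q (i!j) then 1 else 0) * (\<Prod>j<k. c j (i!j)))
     = (\<Prod>j<k. \<Sum>y\<in>{1..n}. if Q y then c j y else (0::real))"
proof -
  have "(\<Sum>i\<in>hm_indices n k. (if \<forall>j<k. Q (i!j) then 1 else 0) * (\<Prod>j<k. c j (i!j)))
      = (\<Sum>i\<in>hm_indices n k. \<Prod>j<k. if Q (i!j) then c j (i!j) else 0)"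
  proof (intro sum.cong refl)
    fix i
    show "(if \<forall>j<k. Q (i!j) then 1 else 0) * (\<Prod>j<k. c j (i!j)) = (\<Prod>j<k. if Q (i!j) then c j (i!j) else 0)"
      using prod_if_zero[where Q="\<lambda>j. Q (i!j)" and a="\<lambda>j. c j (i!j)" and k=k]
      by (cases "\<forall>j<k. Q (i!j)") simp_all
  qed
  also have "\<dots> = (\<Prod>j<k. \<Sum>y\<in>{1..n}. if Q y then c j y else 0)"
    by (rule sum_lists_prod)
  finally show ?thesis .
qed

definition Lw :: "nat \<Rightarrow> nat \<Rightarrow> nat \<Rightarrow> nat set \<Rightarrow> nat list" where
  "Lw n k w S = map (\<lambda>j. if j \<in> S then w else n) [0..<k]"

definition PS :: "nat \<Rightarrow> nat set set" where
  "PS k = {S. S \<subseteq> {..<k} \<and> S \<noteq> {} \<and> S \<noteq> {..<k}}"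

lemma Lw_length[simp]: "length (Lw n k w S) = k" by (simp add: Lw_def)
lemma Lw_nth[simp]: "j < k \<Longrightarrow> Lw n k w S ! j = (if j \<in> S then w else n)" by (simp add: Lw_def)

lemma PS_card: assumes "S \<in> PS k" shows "1 \<le> card S \<and> card S \<le> k - 1"
proof -
  have S: "S \<subseteq> {..<k}" "S \<noteq> {}" "S \<noteq> {..<k}" using assms by (auto simp: PS_def)
  have "finite S" using S(1) finite_subset by blast
  then have "card S \<ge> 1" using S(2) by (simp add: Suc_leI card_gt_0_iff)
  moreover have "card S < card {..<k}" using S by (intro psubset_card_mono) auto
  ultimately show ?thesis by simp
qed

lemma finite_PS: "finite (PS k)"
proof -
  have "PS k \<subseteq> Pow {..<k}" by (auto simp: PS_def)
  then show ?thesis by (rule finite_subset) simp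
qed

lemma Lw_determines:
  assumes "n \<ge> 2" "w \<in> {1..n-1}" "w' \<in> {1..n-1}" "S \<subseteq> {..<k}" "S' \<subseteq> {..<k}"
    "\<forall>j<k. Lw n k w S ! j = (if j \<in> S' then w' else n)"
  shows "S' = S"
proof -
  have "w \<noteq> n" "w' \<noteq> n" using assms(1-3) by auto
  have "j \<in> S \<longleftrightarrow> j \<in> S'" if "j < k" for j
    using assms(6)[rule_format, OF that] that \<open>w \<noteq> n\<close> \<open>w' \<noteq> n\<close> by (auto split: if_splits)
  then show ?thesis using assms(4,5) by blast
qed

lemma U_val:
  assumes "n \<ge> 2" "w \<in> {1..n-1}" "S \<in> PS k"
  shows "U_hm n k (Lw n k w S) = (-1) ^ (card S - 1)"
proof -
  have S: "S \<subseteq> {..<k}" using assms by (auto simp: PS_def)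
  have c: "U_cond n k (Lw n k w S) (card S)"
  proof -
    have "\<forall>j<k. Lw n k w S ! j = (if j \<in> S then w else n)" by simp
    then show ?thesis unfolding U_cond_def using assms(2) S PS_card[OF assms(3)] by blast
  qed
  have u: "t = card S" if ut: "U_cond n k (Lw n k w S) t" for t
  proof -
    obtain w' S' where h: "w' \<in> {1..n-1}" "S' \<subseteq> {..<k}" "card S' = t"
      "\<forall>j<k. Lw n k w S ! j = (if j \<in> S' then w' else n)"
      using ut unfolding U_cond_def by fastforce
    have "S' = S" using Lw_determines[OF assms(1,2) h(1) S h(2) h(4)] .
    then show ?thesis using h(3) by simp
  qed
  have "(THE t. U_cond n k (Lw n k w S) t) = card S" using c u by (rule the_equality)
  moreover have "\<exists>t. U_cond n k (Lw n k w S) t" using c by blast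
  ultimately show ?thesis unfolding U_hm_def by simp
qed

lemma U_zero:
  assumes "i \<in> hm_indices n k" "i \<notin> (\<lambda>(w,S). Lw n k w S) ` ({1..n-1} \<times> PS k)"
  shows "U_hm n k i = 0"
proof (rule ccontr)
  assume "U_hm n k i \<noteq> 0"
  then obtain t where "U_cond n k i t" unfolding U_hm_def by (auto split: if_splits)
  then obtain w S where h: "w \<in> {1..n-1}" "S \<subseteq> {..<k}" "card S = t" "1 \<le> t" "t \<le> k - 1"
      "\<forall>j<k. i ! j = (if j \<in> S then w else n)" unfolding U_cond_def by blast
  have li: "length i = k" using assms(1) by (simp add: hm_indices_def)
  have "i = Lw n k w S" by (rule nth_equalityI) (use li h(6) in auto)
  moreover have "S \<noteq> {}" using h(3,4) by auto
  moreover have "S \<noteq> {..<k}"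
  proof
    assume "S = {..<k}"
    then have "card S = k" by simp
    then show False using h(3,4,5) by simp
  qed
  ultimately have "i \<in> (\<lambda>(w,S). Lw n k w S) ` ({1..n-1} \<times> PS k)"
    using h(1,2) by (intro rev_image_eqI[of "(w, S)"]) (auto simp: PS_def)
  then show False using assms(2) by simp
qed

lemma Lw_inj:
  assumes "n \<ge> 2" shows "inj_on (\<lambda>(w,S). Lw n k w S) ({1..n-1} \<times> PS k)"
proof (rule inj_onI, clarify)
  fix w S w' S' assume h: "w \<in> {1..n-1}" "S \<in> PS k" "w' \<in> {1..n-1}" "S' \<in> PS k"
    "Lw n k w S = Lw n k w' S'"
  have S: "S \<subseteq> {..<k}" "S' \<subseteq> {..<k}" "S \<noteq> {}" using h(2,4) by (auto simp: PS_def)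
  have a: "\<forall>j<k. Lw n k w S ! j = (if j \<in> S' then w' else n)"
  proof (intro allI impI)
    fix j assume "j < k"
    then show "Lw n k w S ! j = (if j \<in> S' then w' else n)" unfolding h(5) by (rule Lw_nth)
  qed
  have SS: "S' = S" by (rule Lw_determines[OF assms h(1,3) S(1,2) a])
  obtain j where j: "j \<in> S" using S(3) by blast
  then have jk: "j < k" using S(1) by auto
  have "w = Lw n k w S ! j" using Lw_nth[OF jk] j by simp
  also have "\<dots> = w'" unfolding h(5) using Lw_nth[OF jk] j SS by simp
  finally show "w = w' \<and> S = S'" using SS by simp
qed

lemma U_sum:
  assumes "n \<ge> 2"
  shows "(\<Sum>i\<in>hm_indices n k. U_hm n k i * (\<Prod>j<k. g j (i!j)))
    = (\<Sum>w\<in>{1..n-1}. \<Sum>S\<in>PS k. (-1) ^ (card S - 1) * (\<Prod>j<k. if j \<in> S then g j w else (g j n :: real)))"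
proof -
  let ?h = "\<lambda>(w,S). Lw n k w S"
  let ?D = "{1..n-1} \<times> PS k"
  have sub: "?h ` ?D \<subseteq> hm_indices n k"
    by (auto simp: hm_indices_def PS_def Lw_def)
  have "(\<Sum>i\<in>hm_indices n k. U_hm n k i * (\<Prod>j<k. g j (i!j)))
      = (\<Sum>i\<in>?h ` ?D. U_hm n k i * (\<Prod>j<k. g j (i!j)))"
    by (rule sum.mono_neutral_right[OF finite_hm sub]) (auto simp: U_zero)
  also have "\<dots> = (\<Sum>x\<in>?D. U_hm n k (?h x) * (\<Prod>j<k. g j (?h x ! j)))"
    by (subst sum.reindex[OF Lw_inj[OF assms]]) (simp add: comp_def)
  also have "\<dots> = (\<Sum>(w,S)\<in>?D. (-1) ^ (card S - 1) * (\<Prod>j<k. if j \<in> S then g j w else g j n))"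
  proof (rule sum.cong[OF refl])
    fix x assume "x \<in> ?D"
    then obtain w S where x: "x = (w, S)" "w \<in> {1..n-1}" "S \<in> PS k" by auto
    have "(\<Prod>j<k. g j (Lw n k w S ! j)) = (\<Prod>j<k. if j \<in> S then g j w else g j n)"
      by (intro prod.cong) auto
    then show "U_hm n k (?h x) * (\<Prod>j<k. g j (?h x ! j)) = (case x of (w,S) \<Rightarrow> (-1) ^ (card S - 1) * (\<Prod>j<k. if j \<in> S then g j w else g j n))"
      unfolding x(1) using U_val[OF assms x(2,3)] by simp
  qed
  also have "\<dots> = (\<Sum>w\<in>{1..n-1}. \<Sum>S\<in>PS k. (-1) ^ (card S - 1) * (\<Prod>j<k. if j \<in> S then g j w else g j n))"
    by (simp add: sum.cartesian_product)
  finally show ?thesis .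
qed

lemma Id_sum:
  assumes "k \<ge> 1"
  shows "(\<Sum>i\<in>hm_indices n k. Id_hm n k i * (\<Prod>j<k. g j (i!j)))
    = (\<Sum>v\<in>{1..n-1}. \<Prod>j<k. (g j v :: real))"
proof -
  have inj: "inj_on (replicate k) {1..n-1}"
  proof (rule inj_onI)
    fix u v :: nat assume "replicate k u = replicate k v"
    then have "replicate k u ! 0 = replicate k v ! 0" by (rule arg_cong[where f="\<lambda>l. l ! 0"])
    then show "u = v" using assms by simp
  qed
  have sub: "replicate k ` {1..n-1} \<subseteq> hm_indices n k"
    by (auto simp: hm_indices_def)
  have z: "Id_hm n k i = 0" if "i \<in> hm_indices n k" "i \<notin> replicate k ` {1..n-1}" for i
  proof (rule ccontr)
    assume "Id_hm n k i \<noteq> 0"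
    then obtain v where v: "v \<in> {1..n-1}" "\<forall>j<k. i ! j = v" unfolding Id_hm_def by (auto split: if_splits)
    have "i = replicate k v" using that(1) v(2) by (intro nth_equalityI) (auto simp: hm_indices_def)
    then show False using that(2) v(1) by auto
  qed
  have "(\<Sum>i\<in>hm_indices n k. Id_hm n k i * (\<Prod>j<k. g j (i!j)))
      = (\<Sum>i\<in>replicate k ` {1..n-1}. Id_hm n k i * (\<Prod>j<k. g j (i!j)))"
    by (rule sum.mono_neutral_right[OF finite_hm sub]) (auto simp: z)
  also have "\<dots> = (\<Sum>v\<in>{1..n-1}. Id_hm n k (replicate k v) * (\<Prod>j<k. g j (replicate k v ! j)))"
    by (subst sum.reindex[OF inj]) (simp add: comp_def)
  also have "\<dots> = (\<Sum>v\<in>{1..n-1}. \<Prod>j<k. g j v)"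
    by (intro sum.cong refl) (auto simp: Id_hm_def intro!: prod.cong)
  finally show ?thesis .
qed



lemma alg:
  fixes s d :: "nat \<Rightarrow> real"
  assumes "k \<ge> 2"
  shows "(\<Prod>j<k. s j) - (\<Prod>j<k. d j) - (\<Prod>j<k. s j - d j)
    = (\<Sum>S\<in>PS k. (-1) ^ (card S - 1) * (\<Prod>j<k. if j \<in> S then d j else s j))
      - (if even k then 2 else 0) * (\<Prod>j<k. d j)"
proof -
  define T where "T X = (\<Prod>j<k. if j \<in> X then d j else s j)" for X
  have TX: "T X = (\<Prod>j\<in>X. d j) * (\<Prod>j\<in>{..<k}-X. s j)" if "X \<subseteq> {..<k}" for X
  proof -
    have "T X = (\<Prod>j\<in>{..<k} \<inter> {j. j \<in> X}. d j) * (\<Prod>j\<in>{..<k} \<inter> - {j. j \<in> X}. s j)"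
      unfolding T_def by (rule prod.If_cases) simp
    moreover have "{..<k} \<inter> {j. j \<in> X} = X" "{..<k} \<inter> - {j. j \<in> X} = {..<k} - X" using that by auto
    ultimately show ?thesis by simp
  qed
  have e1: "(\<Prod>j<k. s j - d j) = (\<Sum>X\<in>Pow {..<k}. (-1) ^ card X * T X)"
  proof -
    have "(\<Prod>j<k. s j - d j) = (\<Sum>X\<in>Pow {..<k}. (-1) ^ card X * (\<Prod>j\<in>X. d j) * (\<Prod>j\<in>{..<k}-X. s j))"
      by (rule prod_diff_conv_sum) simp
    also have "\<dots> = (\<Sum>X\<in>Pow {..<k}. (-1) ^ card X * T X)"
    proof (rule sum.cong[OF refl])
      fix X assume "X \<in> Pow {..<k}"
      then have "T X = (\<Prod>j\<in>X. d j) * (\<Prod>j\<in>{..<k}-X. s j)" using TX by blast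
      then show "(-1) ^ card X * (\<Prod>j\<in>X. d j) * (\<Prod>j\<in>{..<k}-X. s j) = (-1) ^ card X * T X"
        by (simp only: mult.assoc)
    qed
    finally show ?thesis .
  qed
  have "0 \<in> {..<k}" using assms by simp
  then have kne: "{..<k} \<noteq> {}" by blast
  have P: "Pow {..<k} = insert {} (insert {..<k} (PS k))" by (auto simp: PS_def)
  have fPS: "finite (PS k)" by (rule finite_PS)
  have nin: "{} \<notin> insert {..<k} (PS k)" "{..<k} \<notin> PS k" using kne by (auto simp: PS_def)
  have e2: "(\<Sum>X\<in>Pow {..<k}. (-1) ^ card X * T X) = T {} + ((-1) ^ k * T {..<k} + (\<Sum>X\<in>PS k. (-1) ^ card X * T X))"
    unfolding P using fPS nin by (simp add: sum.insert)
  have T0: "T {} = (\<Prod>j<k. s j)" "T {..<k} = (\<Prod>j<k. d j)" unfolding T_def by auto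
  have e3: "(\<Sum>X\<in>PS k. (-1) ^ card X * T X) = - (\<Sum>X\<in>PS k. (-1) ^ (card X - 1) * T X)"
  proof -
    have "(-1) ^ card X * T X = - ((-1) ^ (card X - 1) * T X)" if "X \<in> PS k" for X
    proof -
      have "card X = Suc (card X - 1)" using PS_card[OF that] by simp
      then have "(-1::real) ^ card X = - ((-1) ^ (card X - 1))" by (metis power_Suc mult_minus1)
      then show ?thesis by simp
    qed
    then have "(\<Sum>X\<in>PS k. (-1) ^ card X * T X) = (\<Sum>X\<in>PS k. - ((-1) ^ (card X - 1) * T X))"
      by (rule sum.cong[OF refl])
    then show ?thesis by (simp add: sum_negf)
  qed
  define Q where "Q = (\<Sum>X\<in>PS k. (-1) ^ (card X - 1) * T X)"
  have main: "(\<Prod>j<k. s j - d j) = (\<Prod>j<k. s j) + (-1) ^ k * (\<Prod>j<k. d j) - Q"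
    using e1 e2 e3 T0 unfolding Q_def by simp
  have G: "(\<Prod>j<k. s j) - (\<Prod>j<k. d j) - (\<Prod>j<k. s j - d j) = Q - (if even k then 2 else 0) * (\<Prod>j<k. d j)"
    unfolding main by (cases "even k") simp_all
  then show ?thesis unfolding Q_def T_def .
qed



context tree_ctx
begin

lemma zm_anc: "zeta_mult n E f x = (\<Sum>y\<in>{1..n}. if anc x y then f y else 0)"
  unfolding zeta_mult_def by (intro sum.cong refl) (simp add: zeta_anc)

lemma zm_n: "zeta_mult n E f n = (\<Sum>y\<in>{1..n}. f y)"
  unfolding zm_anc by (intro sum.cong refl) (simp add: anc_n)

lemma zm_not: "(\<Sum>y\<in>{1..n}. if \<not> anc x y then f y else 0) = zeta_mult n E f n - zeta_mult n E f x"
proof -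
  have "(\<Sum>y\<in>{1..n}. f y) = (\<Sum>y\<in>{1..n}. (if anc x y then f y else 0) + (if \<not> anc x y then f y else 0))"
    by (intro sum.cong refl) simp
  also have "\<dots> = (\<Sum>y\<in>{1..n}. if anc x y then f y else 0) + (\<Sum>y\<in>{1..n}. if \<not> anc x y then f y else 0)"
    by (rule sum.distrib)
  finally show ?thesis by (simp add: zm_n zm_anc[of f x])
qed

lemma steiner_indicator:
  assumes i: "i \<in> hm_indices n k" and k: "k \<ge> 1"
  shows "real (steiner n E (set i)) = (\<Sum>v\<in>{1..n-1}. 1 - (if \<forall>j<k. anc v (i!j) then 1 else 0)
                                            - (if \<forall>j<k. \<not> anc v (i!j) then 1 else 0))"
proof -
  have li: "length i = k" and si: "set i \<subseteq> {1..n}" using i by (auto simp: hm_indices_def)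
  have ex: "\<And>Q. (\<exists>y\<in>set i. Q y) \<longleftrightarrow> (\<exists>j<k. Q (i!j))" using li by (metis in_set_conv_nth)
  have "set i \<noteq> {}" using li k by auto
  then have "steiner n E (set i) = card (splitset (set i))" using steiner_split si by blast
  also have "splitset (set i) = {v\<in>{1..n-1}. (\<exists>j<k. anc v (i!j)) \<and> (\<exists>j<k. \<not> anc v (i!j))}"
    unfolding splitset_def ex by simp
  finally have "real (steiner n E (set i)) = (\<Sum>v\<in>{v\<in>{1..n-1}. (\<exists>j<k. anc v (i!j)) \<and> (\<exists>j<k. \<not> anc v (i!j))}. 1)"
    by simp
  also have "\<dots> = (\<Sum>v\<in>{1..n-1}. if (\<exists>j<k. anc v (i!j)) \<and> (\<exists>j<k. \<not> anc v (i!j)) then 1 else 0)"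
    by (rule sum.inter_filter) simp
  also have "\<dots> = (\<Sum>v\<in>{1..n-1}. 1 - (if \<forall>j<k. anc v (i!j) then 1 else 0)
                                            - (if \<forall>j<k. \<not> anc v (i!j) then 1 else 0))"
  proof (rule sum.cong[OF refl])
    fix v
    have "0 < k" using k by simp
    show "(if (\<exists>j<k. anc v (i!j)) \<and> (\<exists>j<k. \<not> anc v (i!j)) then 1 else 0) = 1 - (if \<forall>j<k. anc v (i!j) then 1 else 0)
                                            - (if \<forall>j<k. \<not> anc v (i!j) then (1::real) else 0)"
      using \<open>0 < k\<close> by auto
  qed
  finally show ?thesis .
qed

lemma LHS:
  assumes k: "k \<ge> 1"
  shows "hm_form n k (steiner_hm n E) c =
    (\<Sum>v\<in>{1..n-1}. (\<Prod>j<k. zeta_mult n E (c j) n) - (\<Prod>j<k. zeta_mult n E (c j) v)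
        - (\<Prod>j<k. zeta_mult n E (c j) n - zeta_mult n E (c j) v))"
proof -
  let ?H = "hm_indices n k"
  let ?pr = "\<lambda>i. \<Prod>j<k. c j (i!j)"
  let ?A = "\<lambda>v i. (if \<forall>j<k. anc v (i!j) then 1 else 0) :: real"
  let ?B = "\<lambda>v i. (if \<forall>j<k. \<not> anc v (i!j) then 1 else 0) :: real"
  have "hm_form n k (steiner_hm n E) c = (\<Sum>i\<in>?H. (\<Sum>v\<in>{1..n-1}. 1 - ?A v i - ?B v i) * ?pr i)"
    unfolding hm_form_def steiner_hm_def by (intro sum.cong refl) (simp add: steiner_indicator[OF _ k])
  also have "\<dots> = (\<Sum>i\<in>?H. \<Sum>v\<in>{1..n-1}. ?pr i - ?A v i * ?pr i - ?B v i * ?pr i)"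
    by (intro sum.cong refl, subst sum_distrib_right) (simp add: algebra_simps)
  also have "\<dots> = (\<Sum>v\<in>{1..n-1}. \<Sum>i\<in>?H. ?pr i - ?A v i * ?pr i - ?B v i * ?pr i)"
    by (rule sum.swap)
  also have "\<dots> = (\<Sum>v\<in>{1..n-1}. (\<Sum>i\<in>?H. ?pr i) - (\<Sum>i\<in>?H. ?A v i * ?pr i) - (\<Sum>i\<in>?H. ?B v i * ?pr i))"
    by (simp add: sum_subtractf)
  also have "\<dots> = (\<Sum>v\<in>{1..n-1}. (\<Prod>j<k. zeta_mult n E (c j) n) - (\<Prod>j<k. zeta_mult n E (c j) v)
        - (\<Prod>j<k. zeta_mult n E (c j) n - zeta_mult n E (c j) v))"
  proof (rule sum.cong[OF refl])
    fix v
    have 1: "(\<Sum>i\<in>?H. ?pr i) = (\<Prod>j<k. zeta_mult n E (c j) n)"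
      unfolding zm_n by (rule sum_lists_prod)
    have 2: "(\<Sum>i\<in>?H. ?A v i * ?pr i) = (\<Prod>j<k. zeta_mult n E (c j) v)"
      unfolding zm_anc by (rule sum_lists_filter)
    have 3: "(\<Sum>i\<in>?H. ?B v i * ?pr i) = (\<Prod>j<k. zeta_mult n E (c j) n - zeta_mult n E (c j) v)"
      unfolding zm_not[symmetric] by (rule sum_lists_filter)
    show "(\<Sum>i\<in>?H. ?pr i) - (\<Sum>i\<in>?H. ?A v i * ?pr i) - (\<Sum>i\<in>?H. ?B v i * ?pr i) =
      (\<Prod>j<k. zeta_mult n E (c j) n) - (\<Prod>j<k. zeta_mult n E (c j) v)
        - (\<Prod>j<k. zeta_mult n E (c j) n - zeta_mult n E (c j) v)"
      unfolding 1 2 3 ..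
  qed
  finally show ?thesis .
qed

end

theorem mainTheorem7:
  fixes n k :: nat and E :: "nat set set" and c :: "nat \<Rightarrow> nat \<Rightarrow> real"
  assumes "n \<ge> 2" and "k \<ge> 2" and "is_tree n E"
  shows "hm_form n k (steiner_hm n E) c =
    (if even k
     then hm_form n k (\<lambda>i. U_hm n k i - 2 * Id_hm n k i) (\<lambda>j. zeta_mult n E (c j))
     else hm_form n k (U_hm n k) (\<lambda>j. zeta_mult n E (c j)))"
proof -
  interpret T: tree_ctx n E using assms by unfold_locales
  define g where "g = (\<lambda>j. zeta_mult n E (c j))"
  have k1: "k \<ge> 1" using assms by simp
  have L: "hm_form n k (steiner_hm n E) c =
     (\<Sum>v\<in>{1..n-1}. (\<Sum>S\<in>PS k. (-1) ^ (card S - 1) * (\<Prod>j<k. if j \<in> S then g j v else g j n))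
        - (if even k then 2 else 0) * (\<Prod>j<k. g j v))"
    unfolding T.LHS[OF k1] g_def using alg[OF assms(2)] by simp
  have U: "hm_form n k (U_hm n k) g =
     (\<Sum>w\<in>{1..n-1}. \<Sum>S\<in>PS k. (-1) ^ (card S - 1) * (\<Prod>j<k. if j \<in> S then g j w else g j n))"
    unfolding hm_form_def by (rule U_sum[OF assms(1)])
  have I: "hm_form n k (Id_hm n k) g = (\<Sum>v\<in>{1..n-1}. \<Prod>j<k. g j v)"
    unfolding hm_form_def by (rule Id_sum[OF k1])
  have UI: "hm_form n k (\<lambda>i. U_hm n k i - 2 * Id_hm n k i) g = hm_form n k (U_hm n k) g - 2 * hm_form n k (Id_hm n k) g"
    unfolding hm_form_def by (simp add: algebra_simps sum_subtractf sum_distrib_left)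
  show ?thesis
  proof (cases "even k")
    case True
    then show ?thesis unfolding g_def[symmetric] UI U I L
      by (simp add: sum_subtractf sum_distrib_left)
  next
    case False
    then show ?thesis unfolding g_def[symmetric] U L by simp
  qed
qed

end
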